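(* Let $\mathfrak{g}$ be an SRN under the Single-Objective Framework, with common storage $s$, common data size $d$, common budget $b$, and link cost $c$. Then $\mathfrak{g}$ is bilaterally stable with storage and budget constraints if and only if the following holds. For every pair of distinct agents $i,j$ with $\langle ij\rangle\notin\mathfrak{g}$: if $b-c\,\eta_i(\mathfrak{g})\ge c$ and $s-d\,\eta_j(\mathfrak{g})\ge d$, then $b-c\,\eta_j(\mathfrak{g})<c$ or $s-d\,\eta_i(\mathfrak{g})<d$.
   Context: A social storage network is a simple undirected graph $\mathfrak{g}$ on a finite set of agents; $\eta_i(\mathfrak{g})$ is the number of neighbours of $i$. The networks $\mathfrak{g}\pm\langle ij\rangle$ are obtained by adding or removing the link $\langle ij\rangle$. In the Single-Objective Framework the utility of agent $i$ is $u_i(\mathfrak{g})=\beta_i(1-\lambda^{\eta_i(\mathfrak{g})})$, where $\beta_i>0$ is the worth of $i$'s data and $\lambda\in(0,1)$ is the disk failure rate. An SRN (symmetric resource network) is such a network where every agent $i$ has: - offered storage $s_i=s$; - data size $d_i=d$; - budget $b_i=b$. The per-link cost is $c$. Remaining storage is $RS_i=s_i-\sum_{j\text{ neighbour of }i}d_j$ and remaining budget is $RB_i=b_i-c\,\eta_i(\mathfrak{g})$. $\mathfrak{g}$ is bilaterally stable with storage and budget constraints if both of the following hold. 1. For every link $\langle ij\rangle\in\mathfrak{g}$: if $u_i(\mathfrak{g}-\langle ij\rangle)>u_i(\mathfrak{g})$, then $u_j(\mathfrak{g}-\langle ij\rangle)<u_j(\mathfrak{g})$. 2. For every non-link $\langle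 ij\rangle$: if $u_i(\mathfrak{g}+\langle ij\rangle)>u_i(\mathfrak{g})$ and $RS_j\ge d_i$ and $RB_i\ge c$, then $u_j(\mathfrak{g}+\langle ij\rangle)<u_j(\mathfrak{g})$ or $RS_i<d_j$ or $RB_j<c$. *)

theory Defs
  imports Main Complex_Main
begin

definition network :: "'a set \<Rightarrow> 'a set set \<Rightarrow> bool" where
  "network N g \<longleftrightarrow> finite N \<and> (\<forall>e\<in>g. \<exists>i j. e = {i, j} \<and> i \<in> N \<and> j \<in> N \<and> i \<noteq> j)"

definition neighbours :: "'a set \<Rightarrow> 'a set set \<Rightarrow> 'a \<Rightarrow> 'a set" where
  "neighbours N g i = {j \<in> N. j \<noteq> i \<and> {i, j} \<in> g}"

definition eta :: "'a set \<Rightarrow> 'a set set \<Rightarrow> 'a \<Rightarrow> nat" where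
  "eta N g i = card (neighbours N g i)"

definition add_link :: "'a set set \<Rightarrow> 'a \<Rightarrow> 'a \<Rightarrow> 'a set set" where
  "add_link g i j = insert {i, j} g"

definition del_link :: "'a set set \<Rightarrow> 'a \<Rightarrow> 'a \<Rightarrow> 'a set set" where
  "del_link g i j = g - {{i, j}}"

definition sof_utility :: "'a set \<Rightarrow> ('a \<Rightarrow> real) \<Rightarrow> real \<Rightarrow> 'a set set \<Rightarrow> 'a \<Rightarrow> real" where
  "sof_utility N \<beta> lam g i = \<beta> i * (1 - lam ^ eta N g i)"

definition remaining_storage :: "'a set \<Rightarrow> ('a \<Rightarrow> real) \<Rightarrow> ('a \<Rightarrow> real) \<Rightarrow> 'a set set \<Rightarrow> 'a \<Rightarrow> real" where
  "remaining_storage N s d g i = s i - (\<Sum>j\<in>neighbours N g i. d j)"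

definition remaining_budget :: "'a set \<Rightarrow> ('a \<Rightarrow> real) \<Rightarrow> real \<Rightarrow> 'a set set \<Rightarrow> 'a \<Rightarrow> real" where
  "remaining_budget N b c g i = b i - c * real (eta N g i)"

definition bilaterally_stable_sb ::
  "'a set \<Rightarrow> ('a set set \<Rightarrow> 'a \<Rightarrow> real) \<Rightarrow> ('a \<Rightarrow> real) \<Rightarrow> ('a \<Rightarrow> real) \<Rightarrow> ('a \<Rightarrow> real)
    \<Rightarrow> real \<Rightarrow> 'a set set \<Rightarrow> bool" where
  "bilaterally_stable_sb N u s d b c g \<longleftrightarrow>
     (\<forall>i\<in>N. \<forall>j\<in>N. i \<noteq> j \<longrightarrow> {i, j} \<in> g \<longrightarrow>
        u (del_link g i j) i > u g i \<longrightarrow> u (del_link g i j) j < u g j) \<and>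
     (\<forall>i\<in>N. \<forall>j\<in>N. i \<noteq> j \<longrightarrow> {i, j} \<notin> g \<longrightarrow>
        (u (add_link g i j) i > u g i \<and> remaining_storage N s d g j \<ge> d i
           \<and> remaining_budget N b c g i \<ge> c) \<longrightarrow>
        (u (add_link g i j) j < u g j \<or> remaining_storage N s d g i < d j
           \<or> remaining_budget N b c g j < c))"

end

theory Submission
  imports Defs
begin

lemma nb_add:
  assumes "finite N" "i \<in> N" "j \<in> N" "i \<noteq> j" "{i,j} \<notin> g"
  shows "eta N (add_link g i j) i = Suc (eta N g i)"
proof -
  have "neighbours N (add_link g i j) i = insert j (neighbours N g i)"
    using assms by (auto simp: neighbours_def add_link_def doubleton_eq_iff)
  moreover have "j \<notin> neighbours N g i" using assms by (auto simp: neighbours_def)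
  moreover have "finite (neighbours N g i)" using assms(1) by (simp add: neighbours_def)
  ultimately show ?thesis by (simp add: eta_def)
qed

lemma nb_del:
  assumes "finite N" "i \<in> N" "j \<in> N" "i \<noteq> j" "{i,j} \<in> g"
  shows "Suc (eta N (del_link g i j) i) = eta N g i"
proof -
  have "neighbours N (del_link g i j) i = neighbours N g i - {j}"
    using assms by (auto simp: neighbours_def del_link_def doubleton_eq_iff)
  moreover have "j \<in> neighbours N g i" using assms by (auto simp: neighbours_def)
  moreover have "finite (neighbours N g i)" using assms(1) by (simp add: neighbours_def)
  ultimately show ?thesis by (simp add: eta_def card_gt_0_iff; metis Suc_pred card_gt_0_iff empty_iff)
qed

lemma util_mono:
  assumes "(b::real) > 0" "0 < lam" "lam < 1" "m < n"
  shows "b * (1 - lam ^ m) < b * (1 - lam ^ n)"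
proof -
  have "lam ^ n < lam ^ m" using assms by (simp add: power_strict_decreasing)
  then show ?thesis using assms(1) by simp
qed

lemma rs:
  assumes "finite N"
  shows "remaining_storage N (\<lambda>_. s) (\<lambda>_. d) g i = s - d * real (eta N g i)"
  by (simp add: remaining_storage_def eta_def)

theorem theorem3:
  fixes N :: "'a set" and g :: "'a set set" and \<beta> :: "'a \<Rightarrow> real"
    and lam s d b c :: real
  assumes "network N g"
    and "\<forall>i\<in>N. \<beta> i > 0"
    and "0 < lam" and "lam < 1"
  shows "bilaterally_stable_sb N (sof_utility N \<beta> lam) (\<lambda>_. s) (\<lambda>_. d) (\<lambda>_. b) c g \<longleftrightarrow>
    (\<forall>i\<in>N. \<forall>j\<in>N. i \<noteq> j \<longrightarrow> {i, j} \<notin> g \<longrightarrow>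
       (b - c * real (eta N g i) \<ge> c \<and> s - d * real (eta N g j) \<ge> d) \<longrightarrow>
       (b - c * real (eta N g j) < c \<or> s - d * real (eta N g i) < d))"
proof -
  have fin: "finite N" using assms(1) by (simp add: network_def)
  have del: "\<not> sof_utility N \<beta> lam (del_link g i j) i > sof_utility N \<beta> lam g i"
    if "i \<in> N" "j \<in> N" "i \<noteq> j" "{i,j} \<in> g" for i j
  proof -
    have "Suc (eta N (del_link g i j) i) = eta N g i" using nb_del[OF fin that] .
    then have "sof_utility N \<beta> lam (del_link g i j) i < sof_utility N \<beta> lam g i"
      unfolding sof_utility_def using util_mono assms that by auto
    then show ?thesis by simp
  qed
  have addi: "sof_utility N \<beta> lam (add_link g i j) i > sof_utility N \<beta> lam g i"
    if "i \<in> N" "j \<in> N" "i \<noteq> j" "{i,j} \<notin> g" for i j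
    unfolding sof_utility_def nb_add[OF fin that] using util_mono assms that by auto
  have addj: "\<not> sof_utility N \<beta> lam (add_link g i j) j < sof_utility N \<beta> lam g j"
    if "i \<in> N" "j \<in> N" "i \<noteq> j" "{i,j} \<notin> g" for i j
  proof -
    have "add_link g i j = add_link g j i" by (simp add: add_link_def insert_commute)
    moreover have "{j,i} \<notin> g" using that by (simp add: insert_commute)
    ultimately show ?thesis using addi[of j i] that by auto
  qed
  show ?thesis
    unfolding bilaterally_stable_sb_def rs[OF fin] remaining_budget_def
    using del addi addj by auto
qed

end
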